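(* Let $N$ be a lattice of rank $n$ with basis $\mathbf{e}_1,\ldots,\mathbf{e}_n$, $M$ its dual lattice with dual basis $\mathbf{e}_1^\vee,\ldots,\mathbf{e}_n^\vee$, and let $\mathbf{v}_0,\ldots,\mathbf{v}_n\in N$ with coordinate matrix $V=(\mathbf{v}_0,\ldots,\mathbf{v}_n)=(v_{ij})$ such that $\Sigma=\mathrm{fan}(\mathbf{v}_0,\ldots,\mathbf{v}_n)$ is a fan of $\mathbb{P}(Q)$, i.e. $\sum_{j=0}^n q_j\mathbf{v}_j=0$ and $|\det(\mathbf{v}_1,\ldots,\mathbf{v}_n)|=q_0$, with $Q=(q_0,\ldots,q_n)$ a weights vector (so $q_j=|V_j|$ for all $j$). Let $Q'$ be the reduction of $Q$, $\delta'=\mathrm{lcm}(Q')$, $\delta=\mathrm{lcm}(Q)$, let $\mathbf{n}_j$ be the primitive generator of $\mathbb{R}_{\ge0}\mathbf{v}_j\cap N$, and let $\Delta$ be the polytope of the divisor $H=(\delta'/q'_0)D_0$, namely $\Delta=\{\mathbf{u}\in M\otimes\mathbb{R}:\langle\mathbf{u},\mathbf{n}_0\rangle\geq-\delta'/q'_0,\ \langle\mathbf{u},\mathbf{n}_k\rangle\geq0\ (1\le k\le n)\}$. Then $\Delta=\mathrm{conv}(\mathbf{0},\mathbf{w}_1,\ldots,\mathbf{w}_n)$, where $\mathbf{w}_1,\ldots,\mathbf{w}_n\in M$ are distinct, integral, nonzero vectors whose coordinate matrix $W=(\mathbf{w}_1,\ldots,\mathbf{w}_n)$ in the dual basis is the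 weighted transverse matrix $W=(V^0)^*_Q=((V^0)^{-1})^T\cdot\delta\,\mathrm{diag}(1/q_1,\ldots,1/q_n)$ of $V$, where $V^0=(\mathbf{v}_1,\ldots,\mathbf{v}_n)$. Explicitly, $w_{ik}=\dfrac{\delta\,V^0_{ik}}{q_kV_0}$ for $1\le i,k\le n$, where $V^0_{ik}$ is the cofactor of $v_{ik}$ in $V^0$ and $V_0=\det(V^0)=\pm q_0$.
   Context: A weights vector is an $(n+1)$-tuple of positive integers with gcd $1$; with $d_j=\gcd(q_i:i\neq j)$, $a_j=\mathrm{lcm}(d_i:i\neq j)$, the reduction is $Q'=(q_j/a_j)$. $\mathbb{P}(Q)$ is the weighted projective space $\mathbb{P}^n/((\mu_{q_0}\oplus\cdots\oplus\mu_{q_n})/\Delta)$. $\mathrm{fan}(\mathbf{v}_0,\ldots,\mathbf{v}_n)$ is the collection of cones generated by proper subsets of $\{\mathbf{v}_0,\ldots,\mathbf{v}_n\}$. $V_j$ denotes the determinant of $V$ with column $j$ deleted. $D_0$ is the torus-invariant prime divisor of the ray through $\mathbf{v}_0$. *)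

theory Defs
  imports "HOL-Analysis.Analysis"
begin

text \<open>Lattice N = Z^n with basis indexed by the finite type 'n; M = dual lattice,
  identified with Z^n via the dual basis, pairing = standard dot product.
  The vectors v_0,...,v_n are indexed by 'n option, with None standing for the index 0
  and Some k for the index k (1 <= k <= n).\<close>

definition weights_vector :: "('i::finite \<Rightarrow> nat) \<Rightarrow> bool" where
  "weights_vector Q \<longleftrightarrow> (\<forall>j. 0 < Q j) \<and> Gcd (range Q) = 1"

definition red_d :: "('i::finite \<Rightarrow> nat) \<Rightarrow> 'i \<Rightarrow> nat" where
  "red_d Q j = Gcd (Q ` (UNIV - {j}))"

definition red_a :: "('i::finite \<Rightarrow> nat) \<Rightarrow> 'i \<Rightarrow> nat" where
  "red_a Q j = Lcm (red_d Q ` (UNIV - {j}))"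

definition reduction :: "('i::finite \<Rightarrow> nat) \<Rightarrow> 'i \<Rightarrow> nat" where
  "reduction Q j = Q j div red_a Q j"

definition lcm_weights :: "('i::finite \<Rightarrow> nat) \<Rightarrow> nat" where
  "lcm_weights Q = Lcm (range Q)"

definition real_vec :: "int ^ 'n \<Rightarrow> real ^ 'n" where
  "real_vec x = (\<chi> i. real_of_int (x $ i))"

definition ray_points :: "int ^ 'n \<Rightarrow> (int ^ 'n) set" where
  "ray_points v = {m. \<exists>c::real. c \<ge> 0 \<and> real_vec m = c *\<^sub>R real_vec v}"

definition prim_gen :: "int ^ 'n \<Rightarrow> int ^ 'n" where
  "prim_gen v = (THE u. u \<in> ray_points v \<and> u \<noteq> 0 \<and>
      (\<forall>m\<in>ray_points v. \<exists>k::nat. m = of_nat k *s u))"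

text \<open>Signed cofactor of entry (i,k) of a square matrix, i.e. (-1)^(i+k) times the
  minor; expressed order-free as the determinant of A with row i replaced by e_k.\<close>
definition cofactor_entry :: "'a::comm_ring_1 ^ 'n ^ 'n \<Rightarrow> 'n \<Rightarrow> 'n \<Rightarrow> 'a" where
  "cofactor_entry A i k = det (\<chi> r c. if r = i then (if c = k then 1 else 0) else A $ r $ c)"

end

theory Submission
  imports Defs
begin


lemma cof_row:
  fixes A :: "'a::comm_ring_1 ^ 'n::finite ^ 'n"
  shows "(\<Sum>k\<in>UNIV. A$r$k * cofactor_entry A i k) = (if r = i then det A else 0)"
proof -
  let ?e = "\<lambda>k::'n. (\<chi> c. if c = k then 1 else 0) :: 'a^'n"
  have c: "cofactor_entry A i k = det (\<chi> r'. if r' = i then ?e k else A $ r')" for k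
    unfolding cofactor_entry_def by (rule arg_cong[where f=det]) (simp add: vec_eq_iff)
  have "(\<Sum>k\<in>UNIV. A$r$k * cofactor_entry A i k)
      = (\<Sum>k\<in>UNIV. det (\<chi> r'. if r' = i then A$r$k *s ?e k else A $ r'))"
    unfolding c by (simp add: det_row_mul)
  also have "\<dots> = det (\<chi> r'. if r' = i then (\<Sum>k\<in>UNIV. A$r$k *s ?e k) else A $ r')"
    by (rule det_linear_row_sum[symmetric]) simp
  also have "(\<Sum>k\<in>UNIV. A$r$k *s ?e k) = A $ r"
    by (simp add: vec_eq_iff sum_component if_distrib cong: if_cong)
  also have "det (\<chi> r'. if r' = i then A $ r else A $ r') = (if r = i then det A else 0)"
  proof (cases "r = i")
    case True
    have "(\<chi> r'. if r' = i then A $ r else A $ r') = A"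
      using True by (simp add: vec_eq_iff)
    then show ?thesis using True by simp
  next
    case False
    then show ?thesis
      by (simp, intro det_identical_rows[of r i]) (auto simp: row_def vec_eq_iff)
  qed
  finally show ?thesis .
qed



lemma cof_col:
  fixes A :: "int ^ 'n::finite ^ 'n"
  assumes d: "det A \<noteq> 0"
  shows "(\<Sum>i\<in>UNIV. cofactor_entry A i k * A$i$l) = (if l = k then det A else 0)"
proof -
  define R :: "real^'n^'n" where "R = (\<chi> i j. real_of_int (A$i$j))"
  define B :: "real^'n^'n" where "B = (\<chi> k i. real_of_int (cofactor_entry A i k) / real_of_int (det A))"
  have "R ** B = mat 1"
  proof -
    have "(\<Sum>k\<in>UNIV. real_of_int (A$r$k) * (real_of_int (cofactor_entry A i k) / real_of_int (det A)))
          = (if r = i then 1 else 0)" for r i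
    proof -
      have "(\<Sum>k\<in>UNIV. real_of_int (A$r$k) * (real_of_int (cofactor_entry A i k) / real_of_int (det A)))
          = real_of_int (\<Sum>k\<in>UNIV. A$r$k * cofactor_entry A i k) / real_of_int (det A)"
        by (simp add: sum_divide_distrib)
      also have "\<dots> = (if r = i then 1 else 0)" using d by (simp add: cof_row)
      finally show ?thesis .
    qed
    then show ?thesis
      by (simp add: matrix_matrix_mult_def R_def B_def mat_def vec_eq_iff)
  qed
  then have "B ** R = mat 1" by (simp add: matrix_left_right_inverse)
  then have "(B ** R)$k$l = (mat 1 :: real^'n^'n)$k$l" by simp
  then have "(\<Sum>i\<in>UNIV. real_of_int (cofactor_entry A i k) / real_of_int (det A) * real_of_int (A$i$l))
     = (if k = l then 1 else 0)"
    by (simp add: matrix_matrix_mult_def R_def B_def mat_def)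
  then have "real_of_int (\<Sum>i\<in>UNIV. cofactor_entry A i k * A$i$l) / real_of_int (det A)
     = (if k = l then 1 else 0)"
    by (simp add: sum_divide_distrib)
  then have "real_of_int (\<Sum>i\<in>UNIV. cofactor_entry A i k * A$i$l) = real_of_int (if l = k then det A else 0)"
    using d by (auto simp: field_simps split: if_splits)
  then show ?thesis by (simp only: of_int_eq_iff)
qed



lemma int_from_gcd:
  fixes a :: "'i::finite \<Rightarrow> int" and t :: real
  assumes g: "Gcd (range a) = 1" and h: "\<And>i. t * of_int (a i) \<in> \<int>"
  shows "t \<in> \<int>"
proof -
  obtain j where j: "a j \<noteq> 0"
  proof (cases "\<exists>j. a j \<noteq> 0")
    case False
    then have "range a \<subseteq> {0}" by auto
    then have "Gcd (range a) = 0" by (metis Gcd_0_iff)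
    with g show ?thesis by simp
  qed auto
  obtain p where p: "t * of_int (a j) = of_int p" using h[of j] by (auto elim: Ints_cases)
  have dv: "a j dvd p * a i" for i
  proof -
    obtain r where r: "t * of_int (a i) = of_int r" using h[of i] by (auto elim: Ints_cases)
    have "real_of_int (p * a i) = real_of_int (r * a j)"
      using p r by (simp add: algebra_simps) (metis mult.assoc mult.commute)
    then have "p * a i = r * a j" by (simp only: of_int_eq_iff)
    then show ?thesis by (metis dvd_triv_right)
  qed
  have "a j dvd Gcd ((*) p ` range a)"
    using dv by (auto intro!: Gcd_greatest)
  also have "Gcd ((*) p ` range a) = normalize p" by (simp add: Gcd_mult g)
  finally have "a j dvd p" by simp
  then obtain s where s: "p = a j * s" by (auto elim: dvdE)
  have "t = of_int s" using p j unfolding s by (simp add: field_simps)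
  then show ?thesis by simp
qed

lemma prim_gen_eq:
  fixes v :: "int ^ 'n::finite"
  assumes v0: "v \<noteq> 0"
  defines "g \<equiv> Gcd (range (\<lambda>i. v$i))"
  shows "g > 0 \<and> real_vec (prim_gen v) = (1 / real_of_int g) *\<^sub>R real_vec v"
proof -
  have gpos: "g > 0"
  proof -
    have "g \<noteq> 0" using v0 unfolding g_def by (auto simp: vec_eq_iff Gcd_0_iff)
    moreover have "g \<ge> 0" unfolding g_def by simp
    ultimately show ?thesis by simp
  qed
  define u where "u = (\<chi> i. v$i div g)"
  have gd: "g dvd v$i" for i unfolding g_def by (rule Gcd_dvd) auto
  have vu: "v$i = g * u$i" for i using gd[of i] unfolding u_def by simp
  have gu: "Gcd (range (\<lambda>i. u$i)) = 1"
  proof -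
    have "range (\<lambda>i. v$i) = (*) g ` range (\<lambda>i. u$i)" by (auto simp: vu)
    then have "g = Gcd ((*) g ` range (\<lambda>i. u$i))" unfolding g_def by simp
    also have "\<dots> = g * Gcd (range (\<lambda>i. u$i))" using gpos by (simp add: Gcd_mult)
    finally show ?thesis using gpos by simp
  qed
  have ru: "real_vec u = (1 / real_of_int g) *\<^sub>R real_vec v"
    using gpos by (simp add: real_vec_def vec_eq_iff vu)
  have uin: "u \<in> ray_points v" unfolding ray_points_def using ru gpos by (intro CollectI exI[of _ "1 / real_of_int g"]) simp
  have un0: "u \<noteq> 0" using v0 by (auto simp: vec_eq_iff vu)
  have mult: "\<exists>k::nat. m = of_nat k *s u" if m: "m \<in> ray_points v" for m
  proof -
    obtain c :: real where c: "c \<ge> 0" "real_vec m = c *\<^sub>R real_vec v" using m unfolding ray_points_def by auto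
    define t where "t = c * real_of_int g"
    have mt: "real_of_int (m$i) = t * real_of_int (u$i)" for i
      using c(2) unfolding real_vec_def t_def by (auto simp: vec_eq_iff vu)
    have "t \<in> \<int>"
      by (rule int_from_gcd[OF gu]) (metis mt Ints_of_int)
    moreover have "t \<ge> 0" using c gpos unfolding t_def by simp
    ultimately obtain k :: nat where k: "t = of_nat k"
      by (metis Ints_cases of_int_0_le_iff of_int_of_nat_eq nonneg_int_cases)
    have "m = of_nat k *s u"
      using mt unfolding k by (simp add: vec_eq_iff) (metis of_int_eq_iff of_int_mult of_int_of_nat_eq)
    then show ?thesis by blast
  qed
  have pg: "prim_gen v = u"
    unfolding prim_gen_def
  proof (rule the_equality)
    show "u \<in> ray_points v \<and> u \<noteq> 0 \<and> (\<forall>m\<in>ray_points v. \<exists>k::nat. m = of_nat k *s u)"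
      using uin un0 mult by blast
  next
    fix u' assume a: "u' \<in> ray_points v \<and> u' \<noteq> 0 \<and> (\<forall>m\<in>ray_points v. \<exists>k::nat. m = of_nat k *s u')"
    then obtain k where k: "u = of_nat k *s u'" using uin by blast
    obtain k' where k': "u' = of_nat k' *s u" using a mult by blast
    have "u = of_nat (k * k') *s u" using k k' by (simp add: vector_smult_assoc)
    then have "(of_nat (k * k') - 1) *s u = 0" by (simp add: algebra_simps vector_sadd_rdistrib)
    then have "of_nat (k * k') = (1::int)" using un0 by (auto simp: vec_eq_iff)
    then have "int (k * k') = int 1" by simp
    then have "k * k' = 1" by (simp only: of_nat_eq_iff)
    then have "k' = 1" by simp
    then show "u' = u" using k' by simp
  qed
  show ?thesis using gpos ru pg by simp
qed



lemma Lcm_pairwise_coprime: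
  fixes f :: "'a \<Rightarrow> nat"
  assumes "finite S" "\<And>i j. i \<in> S \<Longrightarrow> j \<in> S \<Longrightarrow> i \<noteq> j \<Longrightarrow> coprime (f i) (f j)"
  shows "Lcm (f ` S) = prod f S"
  using assms
proof (induction S rule: finite_induct)
  case empty then show ?case by simp
next
  case (insert x S)
  have "coprime (f x) (prod f S)"
    by (rule prod_coprime_right) (use insert in auto)
  then show ?case using insert by (simp add: lcm_coprime)
qed

locale wts =
  fixes Q :: "'i::finite \<Rightarrow> nat"
  assumes wv: "weights_vector Q" and two: "\<And>j::'i. \<exists>k. k \<noteq> j"
begin

lemma Qpos: "Q j > 0" using wv unfolding weights_vector_def by auto
lemma Qgcd: "Gcd (range Q) = 1" using wv unfolding weights_vector_def by auto

lemma d_dvd: "k \<noteq> j \<Longrightarrow> red_d Q j dvd Q k"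
  unfolding red_d_def by (rule Gcd_dvd) auto

lemma d_pos: "red_d Q j > 0"
proof -
  obtain k where "k \<noteq> j" using two[of j] by blast
  then have "red_d Q j dvd Q k" by (rule d_dvd)
  then show ?thesis using Qpos[of k] by (cases "red_d Q j = 0") auto
qed

lemma d_coprime: "i \<noteq> j \<Longrightarrow> coprime (red_d Q i) (red_d Q j)"
proof -
  assume ij: "i \<noteq> j"
  have "gcd (red_d Q i) (red_d Q j) dvd Q k" for k
  proof (cases "k = i")
    case True
    then have "red_d Q j dvd Q k" using ij by (intro d_dvd) auto
    then show ?thesis by (meson dvd_trans gcd_dvd2)
  next
    case False
    then have "red_d Q i dvd Q k" by (intro d_dvd) auto
    then show ?thesis by (meson dvd_trans gcd_dvd1)
  qed
  then have "gcd (red_d Q i) (red_d Q j) dvd Gcd (range Q)" by (auto intro!: Gcd_greatest)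
  then show ?thesis using Qgcd by (simp add: coprime_iff_gcd_eq_1)
qed

lemma dQ_coprime: "coprime (red_d Q j) (Q j)"
proof -
  have "gcd (red_d Q j) (Q j) dvd Q k" for k
  proof (cases "k = j")
    case True
    then show ?thesis by simp
  next
    case False
    then have "red_d Q j dvd Q k" by (intro d_dvd) auto
    then show ?thesis by (meson dvd_trans gcd_dvd1)
  qed
  then have "gcd (red_d Q j) (Q j) dvd Gcd (range Q)" by (auto intro!: Gcd_greatest)
  then show ?thesis using Qgcd by (simp add: coprime_iff_gcd_eq_1)
qed

definition "P = (\<Prod>i\<in>UNIV. red_d Q i)"

lemma a_eq: "red_a Q j = (\<Prod>i\<in>UNIV - {j}. red_d Q i)"
  unfolding red_a_def by (rule Lcm_pairwise_coprime) (auto intro: d_coprime)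

lemma ad_P: "red_a Q j * red_d Q j = P"
  unfolding a_eq P_def by (simp add: prod.remove[of UNIV j] mult.commute)

lemma a_dvd: "red_a Q j dvd Q j"
  unfolding red_a_def by (rule Lcm_least) (auto intro: d_dvd)

lemma a_pos: "red_a Q j > 0" using a_dvd[of j] Qpos[of j] by (cases "red_a Q j = 0") auto

lemma red_pos: "reduction Q j > 0"
  unfolding reduction_def using a_dvd[of j] Qpos[of j] a_pos[of j]
  by (auto simp: dvd_div_eq_0_iff)

lemma lcm_red: "lcm_weights (reduction Q) * P = lcm_weights Q"
proof -
  have eq: "P * reduction Q j = Q j * red_d Q j" for j
  proof -
    have "P * reduction Q j = (Q j div red_a Q j * red_a Q j) * red_d Q j"
      unfolding reduction_def ad_P[of j, symmetric] by (simp add: ac_simps)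
    also have "\<dots> = Q j * red_d Q j" using a_dvd[of j] by simp
    finally show ?thesis .
  qed
  have "lcm_weights (reduction Q) * P = Lcm ((*) P ` range (reduction Q))"
    unfolding lcm_weights_def by (subst Lcm_mult) (auto simp: mult.commute)
  also have "(*) P ` range (reduction Q) = range (\<lambda>j. Q j * red_d Q j)"
    by (simp only: image_image eq)
  also have "Lcm (range (\<lambda>j. Q j * red_d Q j)) = Lcm (range Q)"
  proof (rule dvd_antisym)
    show "Lcm (range (\<lambda>j. Q j * red_d Q j)) dvd Lcm (range Q)"
    proof (rule Lcm_least, clarify)
      fix j :: 'i
      obtain k where k: "k \<noteq> j" using two[of j] by blast
      have "Q j dvd Lcm (range Q)" by (rule dvd_Lcm) auto
      have "Q k dvd Lcm (range Q)" by (rule dvd_Lcm) auto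
      moreover have "red_d Q j dvd Lcm (range Q)"
        using d_dvd[OF k] \<open>Q k dvd Lcm (range Q)\<close> by (rule dvd_trans)
      ultimately have "lcm (Q j) (red_d Q j) dvd Lcm (range Q)" by simp
      moreover have "lcm (Q j) (red_d Q j) = Q j * red_d Q j"
        using dQ_coprime[of j] by (simp add: lcm_coprime coprime_commute)
      ultimately show "Q j * red_d Q j dvd Lcm (range Q)" by simp
    qed
    show "Lcm (range Q) dvd Lcm (range (\<lambda>j. Q j * red_d Q j))"
    proof (rule Lcm_least, clarify)
      fix j :: 'i
      have "Q j * red_d Q j dvd Lcm (range (\<lambda>j. Q j * red_d Q j))" by (rule dvd_Lcm) auto
      then show "Q j dvd Lcm (range (\<lambda>j. Q j * red_d Q j))" by (rule dvd_mult_left)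
    qed
  qed
  finally show ?thesis unfolding lcm_weights_def .
qed

lemma key_arith:
  "real (red_d Q j) * real (lcm_weights (reduction Q)) / real (reduction Q j)
     = real (lcm_weights Q) / real (Q j)"
proof -
  have Qj: "Q j = red_a Q j * reduction Q j" unfolding reduction_def using a_dvd[of j] by simp
  have "real (lcm_weights Q) = real (lcm_weights (reduction Q)) * real (red_a Q j) * real (red_d Q j)"
    unfolding lcm_red[symmetric] ad_P[of j, symmetric] by simp
  then show ?thesis unfolding Qj using a_pos[of j] red_pos[of j] by (simp add: field_simps)
qed

lemma Q_dvd_lcm: "Q j dvd lcm_weights Q" unfolding lcm_weights_def by (rule dvd_Lcm) auto

end



lemma sum_option:
  "(\<Sum>j\<in>(UNIV::'a::finite option set). f j) = f None + (\<Sum>k\<in>UNIV. f (Some k))"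
  by (simp add: UNIV_option_conv sum.reindex)

lemma inner_real_vec: "y \<bullet> real_vec (x::int^'n::finite) = (\<Sum>r\<in>UNIV. y$r * real_of_int (x$r))"
  by (simp add: inner_vec_def real_vec_def)

lemma det_row_int:
  fixes T :: "int^'n::finite^'n" and y :: "real^'n"
  assumes h: "\<And>c. y \<bullet> real_vec (T$c) \<in> \<int>"
  shows "y$i * real_of_int (det T) \<in> \<int>"
proof -
  let ?A = "transpose T"
  have "y$i * real_of_int (det T) = (\<Sum>r\<in>UNIV. y$r * real_of_int (if r = i then det ?A else 0))"
    by (simp add: if_distrib cong: if_cong)
  also have "\<dots> = (\<Sum>r\<in>UNIV. y$r * (\<Sum>c\<in>UNIV. real_of_int (?A$r$c) * real_of_int (cofactor_entry ?A i c)))"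
    unfolding cof_row[symmetric] by simp
  also have "\<dots> = (\<Sum>c\<in>UNIV. real_of_int (cofactor_entry ?A i c) * (\<Sum>r\<in>UNIV. y$r * real_of_int (T$c$r)))"
    unfolding sum_distrib_left
    by (subst sum.swap) (simp add: transpose_def ac_simps)
  also have "\<dots> \<in> \<int>"
    using h unfolding inner_real_vec by (rule_tac Ints_sum, rule_tac Ints_mult[OF Ints_of_int]) blast
  finally show ?thesis .
qed



theorem mainTheorem8:
  fixes v :: "'n option \<Rightarrow> int ^ 'n::finite"
    and Q :: "'n option \<Rightarrow> nat"
  defines "V0 \<equiv> (\<chi> i k. v (Some k) $ i) :: int ^ 'n ^ 'n"
  assumes wv: "weights_vector Q"
    and rel: "(\<Sum>j\<in>UNIV. int (Q j) *s v j) = 0"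
    and dt: "\<bar>det V0\<bar> = int (Q None)"
  defines "\<delta> \<equiv> lcm_weights Q"
    and "\<delta>' \<equiv> lcm_weights (reduction Q)"
  defines "\<Delta> \<equiv> {u :: real ^ 'n.
              u \<bullet> real_vec (prim_gen (v None)) \<ge> - (real \<delta>' / real (reduction Q None)) \<and>
              (\<forall>k. u \<bullet> real_vec (prim_gen (v (Some k))) \<ge> 0)}"
  shows "\<exists>w :: 'n \<Rightarrow> real ^ 'n.
           \<Delta> = convex hull (insert 0 (range w)) \<and>
           inj w \<and>
           (\<forall>k. w k \<noteq> 0 \<and> (\<exists>m :: int ^ 'n. w k = real_vec m)) \<and>
           (\<forall>i k. w k $ i = real \<delta> * real_of_int (cofactor_entry V0 i k)
                             / (real (Q (Some k)) * real_of_int (det V0)))"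
proof -
  interpret W: wts Q
  proof
    show "weights_vector Q" by (rule wv)
    fix j :: "'n option"
    show "\<exists>k. k \<noteq> j" by (cases j) auto
  qed
  define D where "D = det V0"
  define q where "q = (\<lambda>j. real (Q j))"
  have qpos: "\<And>j. q j > 0" using W.Qpos by (simp add: q_def)
  have Dabs: "\<bar>D\<bar> = int (Q None)" using dt D_def by simp
  have D0: "D \<noteq> 0" using Dabs W.Qpos[of None] by auto
  define dl where "dl = real \<delta>"
  have dlpos: "dl > 0"
  proof -
    have "\<delta> \<noteq> 0" unfolding \<delta>_def lcm_weights_def using W.Qpos
      by (subst Lcm_0_iff) (auto simp: neq0_conv[symmetric] simp del: neq0_conv)
    then show ?thesis unfolding dl_def by simp
  qed
  have dlq: "dl / q j \<in> \<int>" for j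
  proof -
    obtain t where t: "\<delta> = Q j * t" using W.Q_dvd_lcm[of j] unfolding \<delta>_def by (auto elim: dvdE)
    have "dl / q j = real t" using qpos[of j] unfolding dl_def t q_def by simp
    then show ?thesis by simp
  qed
  define C where "C = cofactor_entry V0"
  define w where "w = (\<lambda>k. \<chi> i. real \<delta> * real_of_int (C i k) / (real (Q (Some k)) * real_of_int D))"
  define rv where "rv = (\<lambda>j. real_vec (v j))"
  have V0e: "V0 $ i $ l = v (Some l) $ i" for i l unfolding V0_def by simp
  have relc: "int (Q None) * v None $ i + (\<Sum>l\<in>UNIV. int (Q (Some l)) * v (Some l) $ i) = 0" for i
  proof -
    have "(\<Sum>j\<in>UNIV. int (Q j) *s v j) $ i = 0" using rel by simp
    then show ?thesis by (simp add: sum_component sum_option)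
  qed
  have relv: "int (Q None) *s v None = (\<Sum>l\<in>UNIV. (- int (Q (Some l))) *s v (Some l))"
    using relc by (simp add: vec_eq_iff sum_component sum_negf eq_neg_iff_add_eq_0)
  have R0: "q None * (u \<bullet> rv None) = - (\<Sum>l\<in>UNIV. q (Some l) * (u \<bullet> rv (Some l)))" for u
  proof -
    have "0 = (\<Sum>i\<in>UNIV. u$i * real_of_int (int (Q None) * v None $ i + (\<Sum>l\<in>UNIV. int (Q (Some l)) * v (Some l) $ i)))"
      using relc by simp
    also have "\<dots> = q None * (u \<bullet> rv None) + (\<Sum>i\<in>UNIV. \<Sum>l\<in>UNIV. q (Some l) * (u$i * real_of_int (v (Some l) $ i)))"
      by (simp add: q_def rv_def inner_real_vec distrib_left sum.distrib sum_distrib_left ac_simps)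
    also have "(\<Sum>i\<in>UNIV. \<Sum>l\<in>UNIV. q (Some l) * (u$i * real_of_int (v (Some l) $ i)))
        = (\<Sum>l\<in>UNIV. q (Some l) * (u \<bullet> rv (Some l)))"
      by (subst sum.swap) (simp add: rv_def inner_real_vec sum_distrib_left)
    finally show ?thesis by simp
  qed
  have F3: "w k \<bullet> rv (Some l) = (if l = k then dl / q (Some k) else 0)" for k l
  proof -
    have "w k \<bullet> rv (Some l) = dl / (q (Some k) * real_of_int D) * real_of_int (\<Sum>i\<in>UNIV. C i k * V0$i$l)"
      by (simp add: w_def rv_def inner_real_vec V0e sum_distrib_left dl_def q_def mult.assoc)
    also have "\<dots> = (if l = k then dl / q (Some k) else 0)"
      unfolding C_def cof_col[OF D0[unfolded D_def]] D_def[symmetric] using D0 by simp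
    finally show ?thesis .
  qed
  have F4: "w k \<bullet> rv None = - dl / q None" for k
  proof -
    have "q None * (w k \<bullet> rv None) = - dl"
      unfolding R0 F3 using qpos[of "Some k"] by (simp add: if_distrib cong: if_cong)
    then show ?thesis using qpos[of None] by (simp add: field_simps)
  qed
  have F5: "u = (\<Sum>k\<in>UNIV. ((u \<bullet> rv (Some k)) * q (Some k) / dl) *\<^sub>R w k)" for u
  proof -
    have "(\<Sum>k\<in>UNIV. ((u \<bullet> rv (Some k)) * q (Some k) / dl) *\<^sub>R w k) $ i = u $ i" for i
    proof -
      have "(\<Sum>k\<in>UNIV. ((u \<bullet> rv (Some k)) * q (Some k) / dl) *\<^sub>R w k) $ i
          = (\<Sum>k\<in>UNIV. (u \<bullet> rv (Some k)) * real_of_int (C i k) / real_of_int D)"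
        using dlpos qpos by (simp add: sum_component w_def dl_def q_def) (intro sum.cong refl, simp add: field_simps W.Qpos[THEN less_not_refl3, symmetric])
      also have "\<dots> = (\<Sum>k\<in>UNIV. \<Sum>j\<in>UNIV. u$j * real_of_int (V0$j$k * C i k) / real_of_int D)"
        by (simp add: rv_def inner_real_vec V0e sum_distrib_right sum_divide_distrib mult.assoc)
      also have "\<dots> = (\<Sum>j\<in>UNIV. u$j * real_of_int (\<Sum>k\<in>UNIV. V0$j$k * C i k) / real_of_int D)"
        by (subst sum.swap) (simp add: sum_distrib_left sum_divide_distrib)
      also have "\<dots> = u $ i"
      proof -
        have eqf: "(\<lambda>j. u$j * real_of_int (if j = i then D else 0) / real_of_int D) = (\<lambda>j. if j = i then u$i else 0)"
          using D0 by auto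
        show ?thesis unfolding C_def cof_row D_def[symmetric] eqf by simp
      qed
      finally show ?thesis .
    qed
    then show ?thesis by (simp add: vec_eq_iff)
  qed

  have vnz: "v j \<noteq> 0" for j
  proof (cases j)
    case None
    have "w undefined \<bullet> rv None \<noteq> 0" using F4 dlpos qpos[of None] by simp
    then show ?thesis using None by (auto simp: rv_def inner_real_vec)
  next
    case (Some k)
    have "w k \<bullet> rv (Some k) \<noteq> 0" using F3 dlpos qpos[of "Some k"] by simp
    then show ?thesis using Some by (auto simp: rv_def inner_real_vec)
  qed
  define T where "T = (\<lambda>l. (\<chi> r. if r = l then v None else v (Some r)) :: int^'n^'n)"
  have tV: "(\<chi> r. v (Some r)) = transpose V0" by (simp add: transpose_def V0_def vec_eq_iff)
  have detT: "int (Q None) * det (T l) = - int (Q (Some l)) * D" for l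
  proof -
    have "int (Q None) * det (T l) = det (\<chi> r. if r = l then int (Q None) *s v None else v (Some r))"
      unfolding T_def by (rule det_row_mul[symmetric])
    also have "\<dots> = det (\<chi> r. if r = l then (\<Sum>m\<in>UNIV. (- int (Q (Some m))) *s v (Some m)) else v (Some r))"
      unfolding relv ..
    also have "\<dots> = (\<Sum>m\<in>UNIV. det (\<chi> r. if r = l then (- int (Q (Some m))) *s v (Some m) else v (Some r)))"
      by (rule det_linear_row_sum) simp
    also have "\<dots> = (\<Sum>m\<in>UNIV. (- int (Q (Some m))) * det (\<chi> r. if r = l then v (Some m) else v (Some r)))"
      by (simp only: det_row_mul)
    also have "\<dots> = (\<Sum>m\<in>UNIV. if m = l then - int (Q (Some l)) * D else 0)"
    proof (rule sum.cong[OF refl])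
      fix m
      show "(- int (Q (Some m))) * det (\<chi> r. if r = l then v (Some m) else v (Some r))
           = (if m = l then - int (Q (Some l)) * D else 0)"
      proof (cases "m = l")
        case True
        have "(\<chi> r. if r = l then v (Some m) else v (Some r)) = (\<chi> r. v (Some r))"
          using True by (simp add: vec_eq_iff)
        then show ?thesis using True by (simp add: tV D_def)
      next
        case False
        have "det (\<chi> r. if r = l then v (Some m) else v (Some r)) = 0"
          by (rule det_identical_rows[of m l]) (use False in \<open>auto simp: row_def vec_eq_iff\<close>)
        then show ?thesis using False by simp
      qed
    qed
    also have "\<dots> = - int (Q (Some l)) * D" by simp
    finally show ?thesis .
  qed
  have absT: "\<bar>det (T l)\<bar> = int (Q (Some l))" for l
  proof -
    have "\<bar>int (Q None) * det (T l)\<bar> = int (Q (Some l)) * int (Q None)"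
      unfolding detT abs_mult using Dabs by simp
    then show ?thesis using W.Qpos[of None] by (simp add: abs_mult)
  qed
  have Trow: "T l $ c = (if c = l then v None else v (Some c))" for l c unfolding T_def by simp

  define g0 where "g0 = Gcd (range (\<lambda>i. v None $ i))"
  have g0eq: "g0 = int (red_d Q None)"
  proof -
    have g0nn: "g0 \<ge> 0" unfolding g0_def by simp
    have gdv: "g0 dvd v None $ i" for i unfolding g0_def by (rule Gcd_dvd) auto
    define u0 where "u0 = (\<chi> i. v None $ i div g0)"
    have vu0: "v None = g0 *s u0" using gdv by (simp add: u0_def vec_eq_iff)
    have g0T: "g0 dvd det (T l)" for l
    proof -
      have "det (T l) = det (\<chi> r. if r = l then g0 *s u0 else v (Some r))"
        unfolding T_def vu0 ..
      also have "\<dots> = g0 * det (\<chi> r. if r = l then u0 else v (Some r))" by (rule det_row_mul)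
      finally show ?thesis by simp
    qed
    have g0Q: "nat g0 dvd Q (Some l)" for l
    proof -
      have "g0 dvd int (Q (Some l))" using g0T[of l] absT[of l] by (metis dvd_abs_iff)
      then show ?thesis using g0nn by (metis nat_dvd_iff nat_int)
    qed
    have 1: "nat g0 dvd red_d Q None"
      unfolding red_d_def proof (rule Gcd_greatest)
      fix a assume "a \<in> Q ` (UNIV - {None})"
      then obtain x where x: "x \<in> UNIV - {None}" "a = Q x" by blast
      then obtain l where "a = Q (Some l)" by (cases x) auto
      then show "nat g0 dvd a" using g0Q by simp
    qed
    have dv: "int (red_d Q None) dvd v None $ i" for i
    proof -
      have "int (red_d Q None) dvd (\<Sum>l\<in>UNIV. int (Q (Some l)) * v (Some l) $ i)"
        by (intro dvd_sum dvd_mult2) (simp add: W.d_dvd)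
      then have "int (red_d Q None) dvd int (Q None) * v None $ i"
        using relc[of i] by (metis add.inverse_unique dvd_minus_iff)
      moreover have "coprime (int (red_d Q None)) (int (Q None))"
        using W.dQ_coprime[of None] by simp
      ultimately show ?thesis using coprime_dvd_mult_right_iff by blast
    qed
    have "int (red_d Q None) dvd g0" unfolding g0_def by (rule Gcd_greatest) (auto intro: dv)
    then have 2: "red_d Q None dvd nat g0" using g0nn by (metis int_dvd_int_iff nat_0_le)
    have "nat g0 = red_d Q None" using 1 2 by (rule dvd_antisym)
    then show ?thesis using g0nn by simp
  qed
  have pg0: "real_vec (prim_gen (v None)) = (1 / real (red_d Q None)) *\<^sub>R rv None"
    and d0pos: "red_d Q None > 0"
    using prim_gen_eq[OF vnz[of None]] g0eq unfolding g0_def rv_def by auto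
  have pgS: "\<exists>g>0. real_vec (prim_gen (v (Some k))) = (1 / real_of_int g) *\<^sub>R rv (Some k)" for k
    using prim_gen_eq[OF vnz[of "Some k"]] unfolding rv_def by blast
  define Dl where "Dl = {u :: real^'n. u \<bullet> rv None \<ge> - dl / q None \<and> (\<forall>k. u \<bullet> rv (Some k) \<ge> 0)}"
  have DD: "\<Delta> = Dl"
  proof -
    have e1: "(u \<bullet> real_vec (prim_gen (v None)) \<ge> - (real \<delta>' / real (reduction Q None)))
          \<longleftrightarrow> u \<bullet> rv None \<ge> - dl / q None" for u
    proof -
      have k: "real (red_d Q None) * real \<delta>' / real (reduction Q None) = dl / q None"
        using W.key_arith[of None] unfolding \<delta>'_def dl_def \<delta>_def q_def .
      have "(u \<bullet> real_vec (prim_gen (v None)) \<ge> - (real \<delta>' / real (reduction Q None)))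
         \<longleftrightarrow> (u \<bullet> rv None) / real (red_d Q None) \<ge> - (real \<delta>' / real (reduction Q None))"
        unfolding pg0 by simp
      also have "\<dots> \<longleftrightarrow> u \<bullet> rv None \<ge> - (real (red_d Q None) * real \<delta>' / real (reduction Q None))"
        using d0pos by (simp add: field_simps)
      finally show ?thesis unfolding k by simp
    qed
    have e2: "(u \<bullet> real_vec (prim_gen (v (Some k))) \<ge> 0) \<longleftrightarrow> u \<bullet> rv (Some k) \<ge> 0" for u k
    proof -
      obtain g where g: "g > 0" "real_vec (prim_gen (v (Some k))) = (1 / real_of_int g) *\<^sub>R rv (Some k)"
        using pgS by blast
      show ?thesis unfolding g(2) using g(1) by (simp add: zero_le_divide_iff)
    qed
    show ?thesis unfolding \<Delta>_def Dl_def using e1 e2 by simp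
  qed

  have wint: "w k \<bullet> real_vec (v j) \<in> \<int>" for k j
  proof (cases j)
    case None
    then show ?thesis using F4[of k] dlq[of None] unfolding rv_def by simp
  next
    case (Some l)
    then show ?thesis using F3[of k l] dlq[of "Some k"] unfolding rv_def by simp
  qed
  have tVc: "transpose V0 $ c = v (Some c)" for c unfolding tV[symmetric] by simp
  have integral: "w k $ i \<in> \<int>" for k i
  proof -
    have qm: "w k $ i * of_int (int (Q m)) \<in> \<int>" for m
    proof -
      obtain M :: "int^'n^'n" where M: "\<bar>det M\<bar> = int (Q m)" "\<And>c. w k \<bullet> real_vec (M$c) \<in> \<int>"
      proof (cases m)
        case None
        show ?thesis
          by (rule that[of "transpose V0"]) (use Dabs None wint tVc in \<open>simp_all add: D_def\<close>)
      next
        case (Some l)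
        show ?thesis
          by (rule that[of "T l"]) (use absT Some wint in \<open>simp_all add: Trow\<close>)
      qed
      have h: "w k $ i * real_of_int (det M) \<in> \<int>" by (rule det_row_int) (rule M(2))
      have "w k $ i * of_int (int (Q m)) = w k $ i * real_of_int \<bar>det M\<bar>" using M(1) by simp
      also have "\<dots> \<in> \<int>"
        using h by (cases "det M \<ge> 0") (simp_all add: abs_if)
      finally show ?thesis .
    qed
    have "Gcd (range (\<lambda>m. int (Q m))) = 1"
    proof -
      have "Gcd (range (\<lambda>m. int (Q m))) = (GCD n\<in>range Q. int n)" by (simp add: image_image)
      also have "\<dots> = 1" using W.Qgcd by (simp only: Gcd_int_eq)
      finally show ?thesis .
    qed
    then show ?thesis by (rule int_from_gcd) (rule qm)
  qed
  have wnz: "w k \<noteq> 0" for k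
    using F3[of k k] dlpos qpos[of "Some k"] by auto
  have winj: "inj w"
  proof (rule injI)
    fix k l assume "w k = w l"
    then have "w k \<bullet> rv (Some k) = w l \<bullet> rv (Some k)" by simp
    then show "k = l" using F3[of k k] F3[of l k] dlpos qpos[of "Some k"] by (auto split: if_splits)
  qed
  have wreal: "\<exists>m :: int ^ 'n. w k = real_vec m" for k
  proof -
    have "\<forall>i. \<exists>z. w k $ i = of_int z" using integral[of k] by (auto elim: Ints_cases)
    then obtain f where f: "\<And>i. w k $ i = of_int (f i)" by metis
    show ?thesis by (rule exI[of _ "\<chi> i. f i"]) (simp add: real_vec_def vec_eq_iff f)
  qed
  have hull: "Dl = convex hull (insert 0 (range w))"
  proof
    show "convex hull (insert 0 (range w)) \<subseteq> Dl"
    proof (rule hull_minimal)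
      show "insert 0 (range w) \<subseteq> Dl"
        unfolding Dl_def using F3 F4 dlpos qpos by (auto simp: divide_nonneg_pos)
      have "Dl = {u. rv None \<bullet> u \<ge> - dl / q None} \<inter> (\<Inter>k. {u. rv (Some k) \<bullet> u \<ge> 0})"
        unfolding Dl_def by (auto simp: inner_commute)
      then show "convex Dl"
        by (simp add: convex_Int convex_INT convex_halfspace_ge)
    qed
    show "Dl \<subseteq> convex hull (insert 0 (range w))"
    proof
      fix u assume u: "u \<in> Dl"
      define c where "c = (\<lambda>k. (u \<bullet> rv (Some k)) * q (Some k) / dl)"
      have cnn: "c k \<ge> 0" for k using u dlpos qpos[of "Some k"] unfolding c_def Dl_def by auto
      have csum: "(\<Sum>k\<in>UNIV. c k) \<le> 1"
      proof -
        have "(\<Sum>k\<in>UNIV. c k) = - (q None * (u \<bullet> rv None)) / dl"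
          unfolding c_def R0 by (simp add: sum_divide_distrib ac_simps)
        also have "\<dots> \<le> 1"
        proof -
          have "u \<bullet> rv None \<ge> - dl / q None" using u unfolding Dl_def by simp
          then have "q None * (u \<bullet> rv None) \<ge> - dl" using qpos[of None] by (simp add: field_simps)
          then show ?thesis using dlpos by (simp add: field_simps)
        qed
        finally show ?thesis .
      qed
      define a where "a = (\<lambda>j. case j of None \<Rightarrow> 1 - (\<Sum>k\<in>UNIV. c k) | Some k \<Rightarrow> c k)"
      define y where "y = (\<lambda>j. case j of None \<Rightarrow> 0 | Some k \<Rightarrow> w k)"
      have "(\<Sum>j\<in>UNIV. a j *\<^sub>R y j) \<in> convex hull (insert 0 (range w))"
      proof (rule convex_sum)
        show "(\<Sum>i\<in>UNIV. a i) = 1" by (simp add: sum_option a_def)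
        show "0 \<le> a i" for i using cnn csum by (cases i) (auto simp: a_def)
        show "y i \<in> convex hull (insert 0 (range w))" for i
          by (cases i) (auto simp: y_def intro: hull_inc)
      qed (auto simp: convex_convex_hull)
      moreover have "(\<Sum>j\<in>UNIV. a j *\<^sub>R y j) = u"
        using F5[of u] by (simp add: sum_option a_def y_def c_def)
      ultimately show "u \<in> convex hull (insert 0 (range w))" by simp
    qed
  qed
  show ?thesis
    by (rule exI[of _ w]) (use DD hull winj wnz wreal in \<open>simp add: w_def C_def D_def\<close>)
qed
end
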